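(* Let $V$ be a finite set of $n$ agents in the uncorrelated-signals setting of the context, assume common knowledge of beliefs (for all $u,w\in V$, $X_u$ is a.s.\ $\mathcal{F}_w$-measurable) and let $X$ be such that almost surely $X=X_u$ for all $u\in V$; let $L$ be the corresponding common optimal action set ($L=\{0\}$ if $X<1/2$, $L=\{1\}$ if $X>1/2$, $L=\{0,1\}$ if $X=1/2$). Then, with $D=D(\mu_1,\mu_0)$ the noise to signal ratio, $$\mathbb{P}(L=\{S\})\ \ge\ 1-\frac{4D}{n+D}.$$
   Context: The state $S$ is uniform on $\{0,1\}$. $\mu_0\neq\mu_1$ are mutually absolutely continuous probability measures on $(\Omega,\mathcal{O})$, and $z(\omega)=\log\frac{d\mu_1}{d\mu_0}(\omega)$; assume $z$ has finite second moment under both $\mu_0$ and $\mu_1$. Uncorrelated-signals setting: $V$ is a set of $n$ agents, agent $u$ has private signal $W_u\in\Omega$; conditionally on $S$, each $W_u$ has law $\mu_S$ (the joint law may be dependent), and with $z_u=z(W_u)$ one has $\mathrm{Cov}(z_u,z_v\mid S)=0$ for all distinct $u,v\in V$. Each agent's information is a $\sigma$-algebra $\mathcal{F}_u$ with $\sigma(W_u)\subseteq\mathcal{F}_u\subseteq\sigma(W_v:v\in V)$, and $X_u=\mathbb{P}(S=1\mid\mathcal{F}_u)$. The noise to signal ratio is $$D(\mu_1,\mu_0)=2\,\frac{\mathrm{Var}_{\mu_1}(z)+\mathrm{Var}_{\mu_0}(z)}{\big(D_{KL}(\mu_1\|\mu_0)+D_{KL}(\mu_0\|\mu_1)\big)^2},$$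 where $\mathrm{Var}_{\mu_s}(z)$ is the variance of $z$ under $\mu_s$ and $D_{KL}$ is the Kullback–Leibler divergence. *)

theory Defs
  imports "HOL-Probability.Probability"
begin

text \<open>Log-likelihood ratio z = log (d mu1 / d mu0) (natural logarithm).\<close>
definition llr :: "'o measure \<Rightarrow> 'o measure \<Rightarrow> 'o \<Rightarrow> real" where
  "llr mu1 mu0 = (\<lambda>x. ln (enn2real (RN_deriv mu0 mu1 x)))"

text \<open>Kullback-Leibler divergence D_KL(mu1 || mu0) with natural logarithm.\<close>
definition KL :: "'o measure \<Rightarrow> 'o measure \<Rightarrow> real" where
  "KL mu1 mu0 = KL_divergence (exp 1) mu0 mu1"

definition noise_signal_ratio :: "'o measure \<Rightarrow> 'o measure \<Rightarrow> real" where
  "noise_signal_ratio mu1 mu0 =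
     2 * (prob_space.variance mu1 (llr mu1 mu0) + prob_space.variance mu0 (llr mu1 mu0))
       / (KL mu1 mu0 + KL mu0 mu1)\<^sup>2"

definition cond_exp_event :: "'w measure \<Rightarrow> 'w set \<Rightarrow> ('w \<Rightarrow> real) \<Rightarrow> real" where
  "cond_exp_event M B Y = (LINT x|M. indicator B x * Y x) / measure M B"

definition cond_cov_event :: "'w measure \<Rightarrow> 'w set \<Rightarrow> ('w \<Rightarrow> real) \<Rightarrow> ('w \<Rightarrow> real) \<Rightarrow> real" where
  "cond_cov_event M B Y Z =
     cond_exp_event M B (\<lambda>x. Y x * Z x) - cond_exp_event M B Y * cond_exp_event M B Z"

text \<open>Optimal action set given belief x = P(S = 1 | ...).\<close>
definition opt_actions :: "real \<Rightarrow> nat set" where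
  "opt_actions x = (if x < 1/2 then {0} else if x > 1/2 then {1} else {0, 1})"

end

theory Submission
  imports Defs
begin


lemma llr_meas[measurable]: "llr mu1 mu0 \<in> borel_measurable mu0"
  unfolding llr_def by measurable

lemma part1_inv:
  assumes mu0: "prob_space mu0" and mu1: "prob_space mu1"
    and sets_eq: "sets mu1 = sets mu0"
    and ac01: "absolutely_continuous mu0 mu1" and ac10: "absolutely_continuous mu1 mu0"
  shows "AE x in mu0. enn2real (RN_deriv mu1 mu0 x) = 1 / enn2real (RN_deriv mu0 mu1 x)
            \<and> 0 < enn2real (RN_deriv mu0 mu1 x) \<and> RN_deriv mu0 mu1 x = ennreal (enn2real (RN_deriv mu0 mu1 x))"
proof -
  interpret P0: prob_space mu0 by fact
  interpret P1: prob_space mu1 by fact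
  define f where "f x = enn2real (RN_deriv mu0 mu1 x)" for x
  have fm[measurable]: "f \<in> borel_measurable mu0" unfolding f_def by measurable
  have fm1[measurable]: "f \<in> borel_measurable mu1" using fm sets_eq by (simp cong: measurable_cong_sets)
  obtain D where D: "D \<in> borel_measurable mu0" "AE x in mu0. RN_deriv mu0 mu1 x = ennreal (D x)"
    "AE x in mu1. 0 < D x" "\<And>x. 0 \<le> D x"
    using P0.real_RN_deriv[OF _ ac01 sets_eq] P1.finite_measure_axioms by metis
  have "AE x in mu0. 0 < D x"
    using absolutely_continuous_AE[OF sets_eq[symmetric] ac10 D(3)] .
  with D(2) have A0: "AE x in mu0. 0 < f x \<and> RN_deriv mu0 mu1 x = ennreal (f x)"
    by eventually_elim (auto simp: f_def)
  have dens: "density mu1 (\<lambda>x. ennreal (1 / f x)) = mu0"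
  proof (rule measure_eqI)
    show "sets (density mu1 (\<lambda>x. ennreal (1 / f x))) = sets mu0" using sets_eq by simp
    fix A assume "A \<in> sets (density mu1 (\<lambda>x. ennreal (1 / f x)))"
    then have A[measurable]: "A \<in> sets mu0" using sets_eq by simp
    have "emeasure (density mu1 (\<lambda>x. ennreal (1 / f x))) A = (\<integral>\<^sup>+ x. ennreal (1 / f x) * indicator A x \<partial>mu1)"
      using A sets_eq by (subst emeasure_density) auto
    also have "\<dots> = (\<integral>\<^sup>+ x. RN_deriv mu0 mu1 x * (ennreal (1 / f x) * indicator A x) \<partial>mu0)"
      using A by (intro P0.RN_deriv_nn_integral[OF ac01 sets_eq]) measurable
    also have "\<dots> = (\<integral>\<^sup>+ x. indicator A x \<partial>mu0)"
      using A0 by (intro nn_integral_cong_AE) (auto simp: ennreal_mult''[symmetric] indicator_def)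
    also have "\<dots> = emeasure mu0 A" using A by simp
    finally show "emeasure (density mu1 (\<lambda>x. ennreal (1 / f x))) A = emeasure mu0 A" .
  qed
  have "AE x in mu1. ennreal (1 / f x) = RN_deriv mu1 mu0 x"
    by (rule P1.RN_deriv_unique[OF _ dens]) measurable
  then have "AE x in mu0. ennreal (1 / f x) = RN_deriv mu1 mu0 x"
    using absolutely_continuous_AE[OF sets_eq[symmetric] ac10] by blast
  with A0 show ?thesis
    by eventually_elim (auto simp: f_def[symmetric] dest: sym)
qed

lemma part1:
  assumes mu0: "prob_space mu0" and mu1: "prob_space mu1"
    and sets_eq: "sets mu1 = sets mu0"
    and mu_ne: "mu0 \<noteq> mu1"
    and ac01: "absolutely_continuous mu0 mu1" and ac10: "absolutely_continuous mu1 mu0"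
    and z2_int0: "integrable mu0 (\<lambda>x. (llr mu1 mu0 x)\<^sup>2)"
    and z2_int1: "integrable mu1 (\<lambda>x. (llr mu1 mu0 x)\<^sup>2)"
  shows "KL mu1 mu0 = integral\<^sup>L mu1 (llr mu1 mu0)"
    "KL mu0 mu1 = - integral\<^sup>L mu0 (llr mu1 mu0)"
    "integral\<^sup>L mu1 (llr mu1 mu0) - integral\<^sup>L mu0 (llr mu1 mu0) > 0"
    "prob_space.variance mu1 (llr mu1 mu0) + prob_space.variance mu0 (llr mu1 mu0) > 0"
proof -
  interpret P0: prob_space mu0 by fact
  interpret P1: prob_space mu1 by fact
  define z where "z = llr mu1 mu0"
  define f where "f x = enn2real (RN_deriv mu0 mu1 x)" for x
  have zf: "z x = ln (f x)" for x unfolding z_def f_def llr_def by simp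
  have zm0[measurable]: "z \<in> borel_measurable mu0" unfolding z_def by measurable
  have zm1[measurable]: "z \<in> borel_measurable mu1" using zm0 sets_eq by (simp cong: measurable_cong_sets)
  have fm[measurable]: "f \<in> borel_measurable mu0" unfolding f_def by measurable
  have zi0: "integrable mu0 z" using P0.square_integrable_imp_integrable[OF zm0] z2_int0 by (simp add: z_def)
  have zi1: "integrable mu1 z" using P1.square_integrable_imp_integrable[OF zm1] z2_int1 by (simp add: z_def)
  have inv: "AE x in mu0. enn2real (RN_deriv mu1 mu0 x) = 1 / f x \<and> 0 < f x \<and> RN_deriv mu0 mu1 x = ennreal (f x)"
    using part1_inv[OF mu0 mu1 sets_eq ac01 ac10] unfolding f_def .
  have rnm: "(\<lambda>x. ln (enn2real (RN_deriv mu1 mu0 x))) \<in> borel_measurable mu0"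
  proof -
    have "(\<lambda>x. ln (enn2real (RN_deriv mu1 mu0 x))) \<in> borel_measurable mu1" by measurable
    then show ?thesis using sets_eq by (simp cong: measurable_cong_sets)
  qed
  show k1: "KL mu1 mu0 = integral\<^sup>L mu1 (llr mu1 mu0)"
    unfolding KL_def KL_divergence_def entropy_density_def llr_def
    by (simp add: comp_def log_def)
  have "KL mu0 mu1 = integral\<^sup>L mu0 (\<lambda>x. ln (enn2real (RN_deriv mu1 mu0 x)))"
    unfolding KL_def KL_divergence_def entropy_density_def
    by (simp add: comp_def log_def)
  also have "\<dots> = integral\<^sup>L mu0 (\<lambda>x. - z x)"
    using inv rnm by (intro integral_cong_AE) (auto simp: zf ln_div)
  finally show k0: "KL mu0 mu1 = - integral\<^sup>L mu0 (llr mu1 mu0)" by (simp add: z_def)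
  have i1: "integral\<^sup>L mu1 z = (\<integral>x. f x * z x \<partial>mu0)"
    using P0.RN_deriv_integral[OF P1.sigma_finite_measure_axioms ac01 sets_eq zm0] by (simp add: f_def)
  have fzi: "integrable mu0 (\<lambda>x. f x * z x)"
    using P0.RN_deriv_integrable[OF P1.sigma_finite_measure_axioms ac01 sets_eq zm0] zi1 by (simp add: f_def)
  have gi: "integrable mu0 (\<lambda>x. (f x - 1) * z x)"
    using Bochner_Integration.integrable_diff[OF fzi zi0] by (simp add: algebra_simps)
  have diff: "integral\<^sup>L mu1 z - integral\<^sup>L mu0 z = (\<integral>x. (f x - 1) * z x \<partial>mu0)"
    using i1 Bochner_Integration.integral_diff[OF fzi zi0] by (simp add: algebra_simps)
  have nn: "AE x in mu0. 0 \<le> (f x - 1) * z x"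
    using inv
  proof eventually_elim
    case (elim x)
    then have fp: "0 < f x" by auto
    show ?case
    proof (cases "f x \<ge> 1")
      case True then show ?thesis using fp by (simp add: zf)
    next
      case False then show ?thesis using fp by (simp add: zf mult_nonpos_nonpos)
    qed
  qed
  have pos: "integral\<^sup>L mu1 z - integral\<^sup>L mu0 z > 0"
  proof (rule ccontr)
    assume "\<not> ?thesis"
    moreover have "0 \<le> (\<integral>x. (f x - 1) * z x \<partial>mu0)" using nn by (rule integral_nonneg_AE)
    ultimately have "(\<integral>x. (f x - 1) * z x \<partial>mu0) = 0" using diff by linarith
    then have "AE x in mu0. (f x - 1) * z x = 0"
      using integral_nonneg_eq_0_iff_AE[OF gi nn] by simp
    with inv have "AE x in mu0. RN_deriv mu0 mu1 x = 1"
      by eventually_elim (auto simp: zf)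
    then have "density mu0 (RN_deriv mu0 mu1) = density mu0 (\<lambda>_. 1)"
      by (intro density_cong) auto
    then have "mu1 = mu0"
      using P0.density_RN_deriv[OF ac01 sets_eq] by (simp add: density_1)
    with mu_ne show False by simp
  qed
  then show "integral\<^sup>L mu1 (llr mu1 mu0) - integral\<^sup>L mu0 (llr mu1 mu0) > 0" by (simp add: z_def)
  show "prob_space.variance mu1 (llr mu1 mu0) + prob_space.variance mu0 (llr mu1 mu0) > 0"
  proof (rule ccontr)
    assume a: "\<not> ?thesis"
    have v1: "0 \<le> P1.variance z" by (rule integral_nonneg_AE) auto
    have v0: "0 \<le> P0.variance z" by (rule integral_nonneg_AE) auto
    with v1 a have "P0.variance z = 0" unfolding z_def by linarith
    moreover have "integrable mu0 (\<lambda>x. (z x - P0.expectation z)\<^sup>2)"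
    proof -
      have "integrable mu0 (\<lambda>x. (z x)\<^sup>2 - 2 * P0.expectation z * z x + (P0.expectation z)\<^sup>2)"
        using z2_int0 zi0 by (simp add: z_def)
      then show ?thesis by (simp add: power2_diff algebra_simps)
    qed
    ultimately have "AE x in mu0. (z x - P0.expectation z)\<^sup>2 = 0"
      using integral_nonneg_eq_0_iff_AE[of mu0 "\<lambda>x. (z x - P0.expectation z)\<^sup>2"] by simp
    then have "AE x in mu1. (z x - P0.expectation z)\<^sup>2 = 0"
      using absolutely_continuous_AE[OF sets_eq ac01] by blast
    then have "integral\<^sup>L mu1 z = integral\<^sup>L mu1 (\<lambda>_. P0.expectation z)"
      by (intro integral_cong_AE) auto
    then have "integral\<^sup>L mu1 z = P0.expectation z" by (simp add: P1.prob_space)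
    with pos show False by simp
  qed
qed



lemma transfer:
  assumes M: "prob_space M" and mu: "prob_space mu" and sets_eq: "sets mu = sets mu0"
    and Wm[measurable]: "W \<in> M \<rightarrow>\<^sub>M mu0" and B[measurable]: "B \<in> sets M"
    and c: "c \<ge> 0"
    and law: "\<And>A. A \<in> sets mu0 \<Longrightarrow> measure M ({w \<in> space M. W w \<in> A} \<inter> B) = measure mu A * c"
    and h[measurable]: "h \<in> borel_measurable mu0" and hi: "integrable mu h"
  shows "integrable M (\<lambda>w. indicator B w * h (W w))"
    "(\<integral>w. indicator B w * h (W w) \<partial>M) = c * integral\<^sup>L mu h"
proof -
  interpret P: prob_space M by fact
  interpret Q: prob_space mu by fact
  define MB where "MB = density M (\<lambda>w. ennreal (indicator B w))"
  have WB[measurable]: "W \<in> MB \<rightarrow>\<^sub>M mu0" unfolding MB_def by simp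
  have hmu[measurable]: "h \<in> borel_measurable mu" using h sets_eq by (simp cong: measurable_cong_sets)
  have deq: "distr MB mu0 W = density mu (\<lambda>_. ennreal c)"
  proof (rule measure_eqI)
    show "sets (distr MB mu0 W) = sets (density mu (\<lambda>_. ennreal c))" using sets_eq by simp
    fix A assume "A \<in> sets (distr MB mu0 W)"
    then have A[measurable]: "A \<in> sets mu0" by simp
    have "emeasure (distr MB mu0 W) A = emeasure MB (W -` A \<inter> space MB)"
      by (rule emeasure_distr) auto
    also have "\<dots> = (\<integral>\<^sup>+ w. ennreal (indicator B w) * indicator (W -` A \<inter> space M) w \<partial>M)"
      unfolding MB_def by (subst emeasure_density) (auto intro!: measurable_sets[OF Wm])
    also have "\<dots> = (\<integral>\<^sup>+ w. indicator ({w \<in> space M. W w \<in> A} \<inter> B) w \<partial>M)"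
      by (intro nn_integral_cong) (auto simp: indicator_def)
    also have "\<dots> = emeasure M ({w \<in> space M. W w \<in> A} \<inter> B)"
      by (intro nn_integral_indicator) measurable
    also have "\<dots> = ennreal (measure mu A * c)"
      by (simp add: P.emeasure_eq_measure law)
    also have "\<dots> = emeasure (density mu (\<lambda>_. ennreal c)) A"
      using sets_eq c by (simp add: emeasure_density_const Q.emeasure_eq_measure ennreal_mult' mult.commute)
    finally show "emeasure (distr MB mu0 W) A = emeasure (density mu (\<lambda>_. ennreal c)) A" .
  qed
  have "integrable (density mu (\<lambda>_. ennreal c)) h"
    using c hi by (subst integrable_density) auto
  then have "integrable MB (\<lambda>w. h (W w))"
    using deq integrable_distr_eq[OF WB h] by simp
  then show "integrable M (\<lambda>w. indicator B w * h (W w))"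
    unfolding MB_def by (subst (asm) integrable_density) auto
  have "integral\<^sup>L (density mu (\<lambda>_. ennreal c)) h = c * integral\<^sup>L mu h"
    using c by (subst integral_density) auto
  moreover have "integral\<^sup>L (distr MB mu0 W) h = (\<integral>w. indicator B w * h (W w) \<partial>M)"
    unfolding MB_def by (subst integral_distr) (auto simp: integral_density)
  ultimately show "(\<integral>w. indicator B w * h (W w) \<partial>M) = c * integral\<^sup>L mu h"
    using deq by simp
qed

lemma stats:
  assumes M: "prob_space M" and mu: "prob_space mu" and sets_eq: "sets mu = sets mu0"
    and P[measurable]: "P \<in> sets M" and mP: "measure M P = 1/2"
    and Wm: "\<And>u. u \<in> V \<Longrightarrow> W u \<in> M \<rightarrow>\<^sub>M mu0"
    and law: "\<And>u A. u \<in> V \<Longrightarrow> A \<in> sets mu0 \<Longrightarrow> measure M ({w \<in> space M. W u w \<in> A} \<inter> P) = measure mu A * (1/2)"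
    and unc: "\<And>u v. u \<in> V \<Longrightarrow> v \<in> V \<Longrightarrow> u \<noteq> v \<Longrightarrow> cond_cov_event M P (\<lambda>w. z (W u w)) (\<lambda>w. z (W v w)) = 0"
    and zm[measurable]: "z \<in> borel_measurable mu0" and zi: "integrable mu z" and z2i: "integrable mu (\<lambda>x. (z x)\<^sup>2)"
    and u: "u \<in> V" and v: "v \<in> V"
  shows "integrable M (\<lambda>w. indicator P w * z (W u w))"
    "(\<integral>w. indicator P w * z (W u w) \<partial>M) = integral\<^sup>L mu z / 2"
    "integrable M (\<lambda>w. indicator P w * ((z (W u w) - integral\<^sup>L mu z) * (z (W v w) - integral\<^sup>L mu z)))"
    "(\<integral>w. indicator P w * ((z (W u w) - integral\<^sup>L mu z) * (z (W v w) - integral\<^sup>L mu z)) \<partial>M)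
       = (if u = v then prob_space.variance mu z / 2 else 0)"
proof -
  interpret P: prob_space M by fact
  interpret Q: prob_space mu by fact
  define m where "m = integral\<^sup>L mu z"
  note [measurable] = Wm[OF u] Wm[OF v]
  have T: "integrable M (\<lambda>w. indicator P w * (h :: _ \<Rightarrow> real) (W x w)) \<and> (\<integral>w. indicator P w * h (W x w) \<partial>M) = 1/2 * integral\<^sup>L mu h"
    if x: "x \<in> V" and h: "h \<in> borel_measurable mu0" "integrable mu h" for x h
    using transfer[of M mu mu0 "W x" P "1/2" h, OF M mu sets_eq Wm[OF x] P] law[OF x] h by simp
  have Tu: "integrable M (\<lambda>w. indicator P w * z (W u w))" "(\<integral>w. indicator P w * z (W u w) \<partial>M) = m / 2"
    using T[OF u zm zi] by (auto simp: m_def)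
  have Tv: "integrable M (\<lambda>w. indicator P w * z (W v w))" "(\<integral>w. indicator P w * z (W v w) \<partial>M) = m / 2"
    using T[OF v zm zi] by (auto simp: m_def)
  show "integrable M (\<lambda>w. indicator P w * z (W u w))" "(\<integral>w. indicator P w * z (W u w) \<partial>M) = integral\<^sup>L mu z / 2"
    using Tu by (auto simp: m_def)
  have hi: "integrable mu (\<lambda>x. (z x - m)\<^sup>2)"
  proof -
    have "integrable mu (\<lambda>x. (z x)\<^sup>2 - 2 * m * z x + m\<^sup>2)"
      using z2i zi by simp
    then show ?thesis by (simp add: power2_diff algebra_simps)
  qed
  have Tu2: "integrable M (\<lambda>w. indicator P w * (z (W u w))\<^sup>2)" using T[OF u _ z2i] by simp
  have Tv2: "integrable M (\<lambda>w. indicator P w * (z (W v w))\<^sup>2)" using T[OF v _ z2i] by simp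
  have Iuv: "integrable M (\<lambda>w. indicator P w * (z (W u w) * z (W v w)))"
  proof (rule Bochner_Integration.integrable_bound[OF Bochner_Integration.integrable_add[OF Tu2 Tv2]])
    show "(\<lambda>w. indicator P w * (z (W u w) * z (W v w))) \<in> borel_measurable M" by measurable
    show "AE w in M. norm (indicator P w * (z (W u w) * z (W v w))) \<le> norm (indicator P w * (z (W u w))\<^sup>2 + indicator P w * (z (W v w))\<^sup>2)"
    proof (intro AE_I2)
      fix w
      have "\<bar>z (W u w) * z (W v w)\<bar> \<le> (z (W u w))\<^sup>2 + (z (W v w))\<^sup>2"
      proof -
        have "2 * \<bar>z (W u w)\<bar> * \<bar>z (W v w)\<bar> \<le> \<bar>z (W u w)\<bar>\<^sup>2 + \<bar>z (W v w)\<bar>\<^sup>2"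
          by (rule sum_squares_bound)
        moreover have "0 \<le> \<bar>z (W u w)\<bar> * \<bar>z (W v w)\<bar>" by simp
        ultimately show ?thesis by (simp only: abs_mult mult.assoc power2_abs)
      qed
      then show "norm (indicator P w * (z (W u w) * z (W v w))) \<le> norm (indicator P w * (z (W u w))\<^sup>2 + indicator P w * (z (W v w))\<^sup>2)"
        by (auto simp: indicator_def)
    qed
  qed
  have eqf: "(\<lambda>w. indicator P w * ((z (W u w) - m) * (z (W v w) - m))) =
     (\<lambda>w. indicator P w * (z (W u w) * z (W v w)) - m * (indicator P w * z (W u w)) - m * (indicator P w * z (W v w)) + m\<^sup>2 * indicator P w)"
    by (rule ext) (simp add: algebra_simps power2_eq_square)
  have IP: "integrable M (indicator P :: 'a \<Rightarrow> real)" by (rule integrable_real_indicator) (auto simp: P.emeasure_eq_measure)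
  show "integrable M (\<lambda>w. indicator P w * ((z (W u w) - integral\<^sup>L mu z) * (z (W v w) - integral\<^sup>L mu z)))"
    unfolding m_def[symmetric] eqf using Iuv Tu Tv IP by simp
  show "(\<integral>w. indicator P w * ((z (W u w) - integral\<^sup>L mu z) * (z (W v w) - integral\<^sup>L mu z)) \<partial>M)
       = (if u = v then prob_space.variance mu z / 2 else 0)"
  proof (cases "u = v")
    case True
    have "(\<integral>w. indicator P w * ((z (W u w) - m) * (z (W v w) - m)) \<partial>M) = (\<integral>w. indicator P w * (z (W u w) - m)\<^sup>2 \<partial>M)"
      using True by (simp add: power2_eq_square)
    also have "\<dots> = 1/2 * integral\<^sup>L mu (\<lambda>x. (z x - m)\<^sup>2)"
      using T[OF u _ hi] by simp
    finally show ?thesis using True by (simp add: m_def)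
  next
    case False
    have "cond_cov_event M P (\<lambda>w. z (W u w)) (\<lambda>w. z (W v w)) = 0" using unc[OF u v False] .
    then have a: "(\<integral>w. indicator P w * (z (W u w) * z (W v w)) \<partial>M) = m\<^sup>2 / 2"
      unfolding cond_cov_event_def cond_exp_event_def mP Tu(2) Tv(2)
      by (simp add: power2_eq_square field_simps)
    have "(\<integral>w. indicator P w * ((z (W u w) - m) * (z (W v w) - m)) \<partial>M) =
       (\<integral>w. indicator P w * (z (W u w) * z (W v w)) - m * (indicator P w * z (W u w)) - m * (indicator P w * z (W v w)) + m\<^sup>2 * indicator P w \<partial>M)"
      unfolding eqf ..
    also have "\<dots> = (\<integral>w. indicator P w * (z (W u w) * z (W v w)) \<partial>M) - m * (\<integral>w. indicator P w * z (W u w) \<partial>M)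
        - m * (\<integral>w. indicator P w * z (W v w) \<partial>M) + m\<^sup>2 * (\<integral>w. indicator P w \<partial>M)"
      using Iuv Tu(1) Tv(1) IP by (simp add: Bochner_Integration.integral_diff Bochner_Integration.integral_add)
    also have "(\<integral>w. indicator P w \<partial>M) = (1/2::real)"
      using mP P by (simp add: Int_absorb2 sets.sets_into_space)
    finally show ?thesis using False a Tu(2) Tv(2) by (simp add: power2_eq_square m_def)
  qed
qed



lemma amgm_aux:
  fixes a b l :: real assumes l: "l > 0"
  shows "- (a * b) \<le> (a\<^sup>2 / l + l * b\<^sup>2) / 2"
proof -
  have "(a\<^sup>2 / l + l * b\<^sup>2) / 2 + a * b = (a + l * b)\<^sup>2 / (2 * l)"
    using l by (simp add: power2_eq_square field_simps)
  moreover have "0 \<le> (a + l * b)\<^sup>2 / (2 * l)" using l by simp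
  ultimately show ?thesis by linarith
qed

lemma final_arith:
  fixes m D n :: real assumes n: "n \<ge> 1" and D: "D \<ge> 0" and m0: "m \<ge> 0" and m1: "m \<ge> 1 - D / n"
  shows "m \<ge> 1 - 4 * D / (n + D)"
proof (cases "3 * D \<ge> n")
  case True
  then have "4 * D / (n + D) \<ge> 1" using n D by (simp add: field_simps)
  then show ?thesis using m0 by linarith
next
  case False
  have "D / n \<le> 4 * D / (n + D)"
    using n D False by (simp add: field_simps) (smt (verit) mult_left_mono)
  then show ?thesis using m1 by linarith
qed

lemma habs: "0 \<le> (a::real) \<and> a \<le> 1 \<Longrightarrow> 0 \<le> b \<and> b \<le> 1 \<Longrightarrow> \<bar>a * b\<bar> \<le> 1"
  by (simp add: abs_mult mult_le_one)

theorem theorem2: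
  fixes M :: "'w measure" and S :: "'w \<Rightarrow> nat"
    and mu0 mu1 :: "'o measure"
    and V :: "'a set" and W :: "'a \<Rightarrow> 'w \<Rightarrow> 'o"
    and F :: "'a \<Rightarrow> 'w measure" and X :: "'w \<Rightarrow> real"
  assumes M: "prob_space M"
    and S_meas: "S \<in> M \<rightarrow>\<^sub>M count_space UNIV"
    and S_vals: "\<And>w. w \<in> space M \<Longrightarrow> S w \<in> {0, 1}"
    and S_unif: "measure M {w \<in> space M. S w = 1} = 1/2"
    and mu0: "prob_space mu0" and mu1: "prob_space mu1"
    and sets_eq: "sets mu1 = sets mu0"
    and mu_ne: "mu0 \<noteq> mu1"
    and ac01: "absolutely_continuous mu0 mu1" and ac10: "absolutely_continuous mu1 mu0"
    and z2_int0: "integrable mu0 (\<lambda>x. (llr mu1 mu0 x)\<^sup>2)"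
    and z2_int1: "integrable mu1 (\<lambda>x. (llr mu1 mu0 x)\<^sup>2)"
    and V_fin: "finite V"
    and W_meas: "\<And>u. u \<in> V \<Longrightarrow> W u \<in> M \<rightarrow>\<^sub>M mu0"
    and W_law0: "\<And>u A. u \<in> V \<Longrightarrow> A \<in> sets mu0 \<Longrightarrow>
        measure M {w \<in> space M. W u w \<in> A \<and> S w = 0}
          = measure mu0 A * measure M {w \<in> space M. S w = 0}"
    and W_law1: "\<And>u A. u \<in> V \<Longrightarrow> A \<in> sets mu0 \<Longrightarrow>
        measure M {w \<in> space M. W u w \<in> A \<and> S w = 1}
          = measure mu1 A * measure M {w \<in> space M. S w = 1}"
    and uncorr: "\<And>u v s. u \<in> V \<Longrightarrow> v \<in> V \<Longrightarrow> u \<noteq> v \<Longrightarrow> s \<in> {0, 1} \<Longrightarrow>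
        cond_cov_event M {w \<in> space M. S w = s}
          (\<lambda>w. llr mu1 mu0 (W u w)) (\<lambda>w. llr mu1 mu0 (W v w)) = 0"
    and F_sub: "\<And>u. u \<in> V \<Longrightarrow> subalgebra M (F u)"
    and F_ge: "\<And>u. u \<in> V \<Longrightarrow> W u \<in> F u \<rightarrow>\<^sub>M mu0"
    and F_le: "\<And>u. u \<in> V \<Longrightarrow> sets (F u) \<subseteq>
        sigma_sets (space M) (\<Union>v\<in>V. {W v -` A \<inter> space M | A. A \<in> sets mu0})"
    and common_knowledge: "\<And>u v. u \<in> V \<Longrightarrow> v \<in> V \<Longrightarrow>
        \<exists>Y \<in> borel_measurable (F v).
          AE w in M. real_cond_exp M (F u) (indicator {w \<in> space M. S w = 1}) w = Y w"
    and X_meas: "X \<in> borel_measurable M"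
    and X_common: "AE w in M. \<forall>u \<in> V.
        X w = real_cond_exp M (F u) (indicator {w \<in> space M. S w = 1}) w"
  shows "measure M {w \<in> space M. opt_actions (X w) = {S w}}
           \<ge> 1 - 4 * noise_signal_ratio mu1 mu0 / (real (card V) + noise_signal_ratio mu1 mu0)"
proof -
  interpret P: prob_space M by fact
  interpret Q0: prob_space mu0 by fact
  interpret Q1: prob_space mu1 by fact
  note [measurable] = S_meas X_meas
  define z where "z = llr mu1 mu0"
  have zm[measurable]: "z \<in> borel_measurable mu0" unfolding z_def by (rule llr_meas)
  have zm1: "z \<in> borel_measurable mu1" using zm sets_eq by (simp cong: measurable_cong_sets)
  have z2i0: "integrable mu0 (\<lambda>x. (z x)\<^sup>2)" using z2_int0 by (simp add: z_def)
  have z2i1: "integrable mu1 (\<lambda>x. (z x)\<^sup>2)" using z2_int1 by (simp add: z_def)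
  have zi0: "integrable mu0 z" using Q0.square_integrable_imp_integrable[OF zm z2i0] .
  have zi1: "integrable mu1 z" using Q1.square_integrable_imp_integrable[OF zm1 z2i1] .
  define m0 where "m0 = integral\<^sup>L mu0 z"
  define m1 where "m1 = integral\<^sup>L mu1 z"
  define v0 where "v0 = prob_space.variance mu0 z"
  define v1 where "v1 = prob_space.variance mu1 z"
  define K where "K = m1 - m0"
  define n where "n = card V"
  define DD where "DD = noise_signal_ratio mu1 mu0"
  note pt1 = part1[OF mu0 mu1 sets_eq mu_ne ac01 ac10 z2_int0 z2_int1]
  have Kpos: "K > 0" using pt1(3) by (simp add: K_def m1_def m0_def z_def)
  have vpos: "v0 + v1 > 0" using pt1(4) by (simp add: v0_def v1_def z_def)
  have v0nn: "v0 \<ge> 0" unfolding v0_def by (rule integral_nonneg_AE) auto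
  have v1nn: "v1 \<ge> 0" unfolding v1_def by (rule integral_nonneg_AE) auto
  have DDeq: "DD = 2 * (v0 + v1) / K\<^sup>2"
    unfolding DD_def noise_signal_ratio_def pt1(1) pt1(2)
    by (simp add: K_def m1_def m0_def v0_def v1_def z_def)
  have DDpos: "DD > 0" using DDeq Kpos vpos by simp
  define P1 where "P1 = {w \<in> space M. S w = 1}"
  define P0 where "P0 = {w \<in> space M. S w = 0}"
  have P1m[measurable]: "P1 \<in> sets M" unfolding P1_def by measurable
  have P0m[measurable]: "P0 \<in> sets M" unfolding P0_def by measurable
  have mP1: "measure M P1 = 1/2" using S_unif by (simp add: P1_def)
  have P0eq: "P0 = space M - P1" using S_vals by (auto simp: P0_def P1_def)
  have mP0: "measure M P0 = 1/2" unfolding P0eq using P.prob_compl[OF P1m] mP1 by simp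
  define Good where "Good = {w \<in> space M. opt_actions (X w) = {S w}}"
  have Good_eq: "Good = {w \<in> space M. (X w < 1/2 \<and> S w = 0) \<or> (1/2 < X w \<and> S w = 1)}"
    using S_vals by (auto simp: Good_def opt_actions_def)
  have Goodm[measurable]: "Good \<in> sets M" unfolding Good_eq by measurable
  show ?thesis
  proof (cases "V = {}")
    case True
    then have "n = 0" by (simp add: n_def)
    then have "1 - 4 * DD / (real n + DD) = -3" using DDpos by simp
    moreover have "0 \<le> measure M Good" by (rule measure_nonneg)
    ultimately show ?thesis unfolding Good_def DD_def n_def by linarith
  next
    case False
    then obtain u0 where u0: "u0 \<in> V" by auto
    have npos: "n \<ge> 1" using False V_fin by (simp add: n_def Suc_le_eq card_gt_0_iff)

    have law1: "measure M ({w \<in> space M. W u w \<in> A} \<inter> P1) = measure mu1 A * (1/2)"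
      if "u \<in> V" "A \<in> sets mu0" for u A
    proof -
      have "{w \<in> space M. W u w \<in> A} \<inter> P1 = {w \<in> space M. W u w \<in> A \<and> S w = 1}" by (auto simp: P1_def)
      then show ?thesis using W_law1[OF that] S_unif by simp
    qed
    have law0: "measure M ({w \<in> space M. W u w \<in> A} \<inter> P0) = measure mu0 A * (1/2)"
      if "u \<in> V" "A \<in> sets mu0" for u A
    proof -
      have "{w \<in> space M. W u w \<in> A} \<inter> P0 = {w \<in> space M. W u w \<in> A \<and> S w = 0}" by (auto simp: P0_def)
      then show ?thesis using W_law0[OF that] mP0 by (simp add: P0_def)
    qed
    have unc1: "cond_cov_event M P1 (\<lambda>w. z (W u w)) (\<lambda>w. z (W v w)) = 0"
      if "u \<in> V" "v \<in> V" "u \<noteq> v" for u v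
      using uncorr[OF that, of 1] by (simp add: P1_def z_def)
    have unc0: "cond_cov_event M P0 (\<lambda>w. z (W u w)) (\<lambda>w. z (W v w)) = 0"
      if "u \<in> V" "v \<in> V" "u \<noteq> v" for u v
      using uncorr[OF that, of 0] by (simp add: P0_def z_def)
    have S1a: "integrable M (\<lambda>w. indicator P1 w * z (W u w))" if "u \<in> V" for u
      by (rule stats(1)[of M mu1 mu0 P1 V W z u u, OF M mu1 sets_eq P1m mP1]) (fact W_meas law1 unc1 zm zi1 z2i1 that)+
    have S1b: "(\<integral>w. indicator P1 w * z (W u w) \<partial>M) = m1 / 2" if "u \<in> V" for u
      unfolding m1_def
      by (rule stats(2)[of M mu1 mu0 P1 V W z u u, OF M mu1 sets_eq P1m mP1]) (fact W_meas law1 unc1 zm zi1 z2i1 that)+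
    have S1c: "integrable M (\<lambda>w. indicator P1 w * ((z (W u w) - m1) * (z (W v w) - m1)))" if "u \<in> V" "v \<in> V" for u v
      unfolding m1_def
      by (rule stats(3)[of M mu1 mu0 P1 V W z u v, OF M mu1 sets_eq P1m mP1]) (fact W_meas law1 unc1 zm zi1 z2i1 that)+
    have S1d: "(\<integral>w. indicator P1 w * ((z (W u w) - m1) * (z (W v w) - m1)) \<partial>M) = (if u = v then v1 / 2 else 0)" if "u \<in> V" "v \<in> V" for u v
      unfolding m1_def v1_def
      by (rule stats(4)[of M mu1 mu0 P1 V W z u v, OF M mu1 sets_eq P1m mP1]) (fact W_meas law1 unc1 zm zi1 z2i1 that)+
    have S0a: "integrable M (\<lambda>w. indicator P0 w * z (W u w))" if "u \<in> V" for u
      by (rule stats(1)[of M mu0 mu0 P0 V W z u u, OF M mu0 refl P0m mP0]) (fact W_meas law0 unc0 zm zi0 z2i0 that)+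
    have S0c: "integrable M (\<lambda>w. indicator P0 w * ((z (W u w) - m0) * (z (W v w) - m0)))" if "u \<in> V" "v \<in> V" for u v
      unfolding m0_def
      by (rule stats(3)[of M mu0 mu0 P0 V W z u v, OF M mu0 refl P0m mP0]) (fact W_meas law0 unc0 zm zi0 z2i0 that)+
    have S0d: "(\<integral>w. indicator P0 w * ((z (W u w) - m0) * (z (W v w) - m0)) \<partial>M) = (if u = v then v0 / 2 else 0)" if "u \<in> V" "v \<in> V" for u v
      unfolding m0_def v0_def
      by (rule stats(4)[of M mu0 mu0 P0 V W z u v, OF M mu0 refl P0m mP0]) (fact W_meas law0 unc0 zm zi0 z2i0 that)+
    define J1 :: "'w \<Rightarrow> real" where "J1 = indicator P1"
    define J0 :: "'w \<Rightarrow> real" where "J0 = indicator P0"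
    have J1m[measurable]: "J1 \<in> borel_measurable M" unfolding J1_def by measurable
    have J1i: "integrable M J1" unfolding J1_def by (rule integrable_real_indicator) (auto simp: P.emeasure_eq_measure)
    have J0i: "integrable M J0" unfolding J0_def by (rule integrable_real_indicator) (auto simp: P.emeasure_eq_measure)
    have intJ1: "integral\<^sup>L M J1 = 1/2" using mP1 P1m by (simp add: J1_def Int_absorb2 sets.sets_into_space)
    have Jsum: "J0 w + J1 w = 1" if "w \<in> space M" for w
      using S_vals[OF that] that by (auto simp: J0_def J1_def P0_def P1_def indicator_def)
    have J1sq: "J1 w * J1 w = J1 w" for w by (simp add: J1_def indicator_def)
    have J1b: "0 \<le> J1 w \<and> J1 w \<le> 1" for w by (simp add: J1_def indicator_def)
    define zeta where "zeta u w = z (W u w) - m0 - K * J1 w" for u w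
    have zetam[measurable]: "zeta u \<in> borel_measurable M" if "u \<in> V" for u
      using W_meas[OF that] unfolding zeta_def by measurable
    have zu_i: "integrable M (\<lambda>w. z (W u w))" if "u \<in> V" for u
    proof -
      have "integrable M (\<lambda>w. J0 w * z (W u w) + J1 w * z (W u w))"
        using S1a[OF that] S0a[OF that] unfolding J0_def J1_def by (rule Bochner_Integration.integrable_add[rotated])
      moreover have "integrable M (\<lambda>w. J0 w * z (W u w) + J1 w * z (W u w)) = integrable M (\<lambda>w. z (W u w))"
        by (rule Bochner_Integration.integrable_cong) (simp_all add: Jsum distrib_right[symmetric])
      ultimately show ?thesis by simp
    qed
    have zetai: "integrable M (zeta u)" if "u \<in> V" for u
      unfolding zeta_def using zu_i[OF that] J1i by simp
    have zz_eq: "zeta u w * zeta v w = J1 w * ((z (W u w) - m1) * (z (W v w) - m1)) + J0 w * ((z (W u w) - m0) * (z (W v w) - m0))"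
      if "w \<in> space M" for u v w
    proof (cases "S w = 1")
      case True
      then show ?thesis using that by (simp add: zeta_def J0_def J1_def P0_def P1_def K_def)
    next
      case False
      then have "S w = 0" using S_vals[OF that] by auto
      then show ?thesis using that by (simp add: zeta_def J0_def J1_def P0_def P1_def K_def)
    qed
    have zz: "integrable M (\<lambda>w. zeta u w * zeta v w) \<and> (\<integral>w. zeta u w * zeta v w \<partial>M) = (if u = v then (v0 + v1) / 2 else 0)"
      if "u \<in> V" "v \<in> V" for u v
    proof -
      have i1: "integrable M (\<lambda>w. J1 w * ((z (W u w) - m1) * (z (W v w) - m1)) + J0 w * ((z (W u w) - m0) * (z (W v w) - m0)))"
        using S1c[OF that] S0c[OF that] unfolding J0_def J1_def by (rule Bochner_Integration.integrable_add)
      have i2: "(\<integral>w. J1 w * ((z (W u w) - m1) * (z (W v w) - m1)) + J0 w * ((z (W u w) - m0) * (z (W v w) - m0)) \<partial>M) = (if u = v then (v0 + v1) / 2 else 0)"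
        using S1c[OF that] S0c[OF that] S1d[OF that] S0d[OF that] unfolding J0_def J1_def
        by (simp add: Bochner_Integration.integral_add add_divide_distrib)
      have e1: "integrable M (\<lambda>w. zeta u w * zeta v w) = integrable M (\<lambda>w. J1 w * ((z (W u w) - m1) * (z (W v w) - m1)) + J0 w * ((z (W u w) - m0) * (z (W v w) - m0)))"
        by (rule Bochner_Integration.integrable_cong) (simp_all add: zz_eq)
      have e2: "(\<integral>w. zeta u w * zeta v w \<partial>M) = (\<integral>w. J1 w * ((z (W u w) - m1) * (z (W v w) - m1)) + J0 w * ((z (W u w) - m0) * (z (W v w) - m0)) \<partial>M)"
        by (rule Bochner_Integration.integral_cong) (simp_all add: zz_eq)
      show ?thesis using i1 i2 e1 e2 by simp
    qed
    define zt where "zt w = (\<Sum>u\<in>V. zeta u w)" for w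
    have zt2: "integrable M (\<lambda>w. (zt w)\<^sup>2) \<and> (\<integral>w. (zt w)\<^sup>2 \<partial>M) = n * (v0 + v1) / 2"
    proof -
      have eq: "(zt w)\<^sup>2 = (\<Sum>u\<in>V. \<Sum>v\<in>V. zeta u w * zeta v w)" for w
        unfolding zt_def power2_eq_square by (rule sum_product)
      have i: "integrable M (\<lambda>w. \<Sum>u\<in>V. \<Sum>v\<in>V. zeta u w * zeta v w)"
        using zz by (intro Bochner_Integration.integrable_sum) auto
      have "(\<integral>w. (\<Sum>u\<in>V. \<Sum>v\<in>V. zeta u w * zeta v w) \<partial>M) = (\<Sum>u\<in>V. \<Sum>v\<in>V. (\<integral>w. zeta u w * zeta v w \<partial>M))"
      proof -
        have "(\<integral>w. (\<Sum>u\<in>V. \<Sum>v\<in>V. zeta u w * zeta v w) \<partial>M) = (\<Sum>u\<in>V. (\<integral>w. (\<Sum>v\<in>V. zeta u w * zeta v w) \<partial>M))"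
          using zz by (intro Bochner_Integration.integral_sum Bochner_Integration.integrable_sum) auto
        also have "\<dots> = (\<Sum>u\<in>V. \<Sum>v\<in>V. (\<integral>w. zeta u w * zeta v w \<partial>M))"
          using zz by (intro sum.cong refl Bochner_Integration.integral_sum) auto
        finally show ?thesis .
      qed
      also have "\<dots> = (\<Sum>u\<in>V. \<Sum>v\<in>V. (if u = v then (v0 + v1) / 2 else 0))"
        using zz by (intro sum.cong refl) auto
      also have "\<dots> = n * (v0 + v1) / 2" using V_fin by (simp add: n_def)
      finally show ?thesis using i by (simp add: eq)
    qed
    have Xae: "AE w in M. X w = real_cond_exp M (F u) J1 w" if "u \<in> V" for u
      using X_common by (rule eventually_mono) (use that in \<open>simp add: J1_def P1_def\<close>)
    have CE: "integrable M (\<lambda>w. z (W u w) * X w) \<and> (\<integral>w. z (W u w) * X w \<partial>M) = (\<integral>w. z (W u w) * J1 w \<partial>M)"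
      if "u \<in> V" for u
    proof -
      interpret C: finite_measure_subalgebra M "F u"
        using F_sub[OF that] P.finite_measure_axioms
        by (simp add: finite_measure_subalgebra_def finite_measure_subalgebra_axioms_def)
      have fm: "(\<lambda>w. z (W u w)) \<in> borel_measurable (F u)" by (rule measurable_compose[OF F_ge[OF that] zm])
      have fmM[measurable]: "(\<lambda>w. z (W u w)) \<in> borel_measurable M" by (rule measurable_compose[OF W_meas[OF that] zm])
      have i: "integrable M (\<lambda>w. z (W u w) * J1 w)" using S1a[OF that] by (simp add: J1_def mult.commute)
      note R = C.real_cond_exp_intg[OF i fm J1m]
      have gmM: "real_cond_exp M (F u) J1 \<in> borel_measurable M"
        by (rule measurable_from_subalg[OF C.subalg]) simp
      have ae: "AE w in M. z (W u w) * X w = z (W u w) * real_cond_exp M (F u) J1 w"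
        using Xae[OF that] by eventually_elim simp
      have "integrable M (\<lambda>w. z (W u w) * X w) = integrable M (\<lambda>w. z (W u w) * real_cond_exp M (F u) J1 w)"
        using ae gmM by (intro integrable_cong_AE) auto
      moreover have "(\<integral>w. z (W u w) * X w \<partial>M) = (\<integral>w. z (W u w) * real_cond_exp M (F u) J1 w \<partial>M)"
        using ae gmM by (intro integral_cong_AE) auto
      ultimately show ?thesis using R by simp
    qed
    have CE0: "integrable M (\<lambda>w. X w * X w) \<and> integrable M (\<lambda>w. X w * J1 w) \<and> integrable M X
       \<and> (\<integral>w. X w * X w \<partial>M) = (\<integral>w. X w * J1 w \<partial>M) \<and> integral\<^sup>L M X = 1/2 \<and> (AE w in M. 0 \<le> X w \<and> X w \<le> 1)"
    proof -
      interpret C: finite_measure_subalgebra M "F u0"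
        using F_sub[OF u0] P.finite_measure_axioms
        by (simp add: finite_measure_subalgebra_def finite_measure_subalgebra_axioms_def)
      define g where "g = real_cond_exp M (F u0) J1"
      have gm: "g \<in> borel_measurable (F u0)" unfolding g_def by simp
      have gmM[measurable]: "g \<in> borel_measurable M" by (rule measurable_from_subalg[OF C.subalg gm])
      have gb: "AE w in M. 0 \<le> g w \<and> g w \<le> 1"
      proof -
        have "AE w in M. 0 \<le> g w" unfolding g_def by (rule C.real_cond_exp_ge_c[OF J1i]) (simp add: J1b)
        moreover have "AE w in M. g w \<le> 1" unfolding g_def by (rule C.real_cond_exp_le_c[OF J1i]) (simp add: J1b)
        ultimately show ?thesis by eventually_elim simp
      qed
      have Xg: "AE w in M. X w = g w" using Xae[OF u0] by (simp add: g_def)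
      have one: "integrable M (\<lambda>_. 1::real)" by simp
      have ig: "integrable M g"
        by (rule Bochner_Integration.integrable_bound[OF one gmM]) (use gb in \<open>eventually_elim, simp\<close>)
      have "AE w in M. norm (g w * J1 w) \<le> norm (1::real)" using gb by eventually_elim (metis habs J1b norm_one real_norm_def)
      then have igJ: "integrable M (\<lambda>w. g w * J1 w)"
        by (intro Bochner_Integration.integrable_bound[OF one]) measurable
      have "AE w in M. norm (g w * g w) \<le> norm (1::real)" using gb by eventually_elim (metis habs norm_one real_norm_def)
      then have igg: "integrable M (\<lambda>w. g w * g w)"
        by (intro Bochner_Integration.integrable_bound[OF one]) measurable
      have r1: "(\<integral>w. g w * g w \<partial>M) = (\<integral>w. g w * J1 w \<partial>M)"
        using C.real_cond_exp_intg(2)[OF _ gm J1m] igJ by (simp add: g_def)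
      have fm1: "(\<lambda>w. 1::real) \<in> borel_measurable (F u0)" by simp
      have r2: "integral\<^sup>L M g = 1/2"
        using C.real_cond_exp_intg(2)[OF _ fm1 J1m] J1i intJ1 by (simp add: g_def)
      have a1: "integrable M (\<lambda>w. X w * X w) = integrable M (\<lambda>w. g w * g w)"
        using Xg by (intro integrable_cong_AE) (auto elim: eventually_mono)
      have a2: "integrable M (\<lambda>w. X w * J1 w) = integrable M (\<lambda>w. g w * J1 w)"
        using Xg by (intro integrable_cong_AE) (auto elim: eventually_mono)
      have a3: "integrable M X = integrable M g"
        using Xg by (intro integrable_cong_AE) auto
      have b1: "(\<integral>w. X w * X w \<partial>M) = (\<integral>w. g w * g w \<partial>M)"
        using Xg by (intro integral_cong_AE) (auto elim: eventually_mono)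
      have b2: "(\<integral>w. X w * J1 w \<partial>M) = (\<integral>w. g w * J1 w \<partial>M)"
        using Xg by (intro integral_cong_AE) (auto elim: eventually_mono)
      have b3: "integral\<^sup>L M X = integral\<^sup>L M g"
        using Xg by (intro integral_cong_AE) auto
      have "AE w in M. 0 \<le> X w \<and> X w \<le> 1" using Xg gb by eventually_elim simp
      then show ?thesis using a1 a2 a3 b1 b2 b3 igg igJ ig r1 r2 by simp
    qed
    define e where "e w = J1 w - X w" for w
    define q where "q = (\<integral>w. (e w)\<^sup>2 \<partial>M)"
    define c where "c = (\<integral>w. X w * J1 w \<partial>M)"
    have XXi: "integrable M (\<lambda>w. X w * X w)" and XJi: "integrable M (\<lambda>w. X w * J1 w)" and Xi: "integrable M X"
      and XXc: "(\<integral>w. X w * X w \<partial>M) = c" and intX: "integral\<^sup>L M X = 1/2"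
      using CE0 by (simp_all add: c_def)
    have e2eq: "(e w)\<^sup>2 = J1 w - 2 * (X w * J1 w) + X w * X w" for w
      by (cases "w \<in> P1") (simp_all add: e_def J1_def power2_eq_square algebra_simps)
    have e2i: "integrable M (\<lambda>w. (e w)\<^sup>2)"
      unfolding e2eq using J1i XJi XXi by (intro Bochner_Integration.integrable_add Bochner_Integration.integrable_diff Bochner_Integration.integrable_mult_right)
    have qeq: "q = 1/2 - c"
      unfolding q_def e2eq using J1i XJi XXi intJ1 XXc
      by (simp add: Bochner_Integration.integral_diff Bochner_Integration.integral_add c_def)
    have ze: "integrable M (\<lambda>w. zeta u w * e w) \<and> (\<integral>w. zeta u w * e w \<partial>M) = - K * q" if "u \<in> V" for u
    proof -
      have eq: "zeta u w * e w = z (W u w) * J1 w - z (W u w) * X w - m0 * J1 w + m0 * X w - K * J1 w + K * (X w * J1 w)" for w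
        by (cases "w \<in> P1") (simp_all add: zeta_def e_def J1_def algebra_simps)
      have A: "integrable M (\<lambda>w. z (W u w) * J1 w)" using S1a[OF that] by (simp add: J1_def mult.commute)
      note B = CE[OF that]
      have i: "integrable M (\<lambda>w. z (W u w) * J1 w - z (W u w) * X w - m0 * J1 w + m0 * X w - K * J1 w + K * (X w * J1 w))"
        using A B J1i Xi XJi by (intro Bochner_Integration.integrable_add Bochner_Integration.integrable_diff Bochner_Integration.integrable_mult_right) auto
      have "(\<integral>w. z (W u w) * J1 w - z (W u w) * X w - m0 * J1 w + m0 * X w - K * J1 w + K * (X w * J1 w) \<partial>M)
          = (\<integral>w. z (W u w) * J1 w \<partial>M) - (\<integral>w. z (W u w) * X w \<partial>M) - m0 * integral\<^sup>L M J1 + m0 * integral\<^sup>L M X - K * integral\<^sup>L M J1 + K * c"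
        using A B J1i Xi XJi by (simp add: Bochner_Integration.integral_diff Bochner_Integration.integral_add c_def)
      also have "\<dots> = - K * (1/2 - c)"
        unfolding conjunct2[OF B] intJ1 intX by (simp add: algebra_simps)
      also have "\<dots> = - K * q" by (simp add: qeq)
      finally show ?thesis using i by (simp add: eq)
    qed
    define l where "l = real n * K"
    have lpos: "l > 0" using npos Kpos by (simp add: l_def)
    have zte: "integrable M (\<lambda>w. zt w * e w) \<and> (\<integral>w. zt w * e w \<partial>M) = - l * q"
    proof -
      have eq: "zt w * e w = (\<Sum>u\<in>V. zeta u w * e w)" for w unfolding zt_def by (rule sum_distrib_right)
      have "integrable M (\<lambda>w. \<Sum>u\<in>V. zeta u w * e w)"
        using ze by (intro Bochner_Integration.integrable_sum) auto
      moreover have "(\<integral>w. (\<Sum>u\<in>V. zeta u w * e w) \<partial>M) = (\<Sum>u\<in>V. (\<integral>w. zeta u w * e w \<partial>M))"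
        using ze by (intro Bochner_Integration.integral_sum) auto
      moreover have "(\<Sum>u\<in>V. (\<integral>w. zeta u w * e w \<partial>M)) = (\<Sum>u\<in>V. - K * q)"
        using ze by (intro sum.cong) auto
      ultimately show ?thesis by (simp add: eq l_def n_def)
    qed
    have "(\<integral>w. - (zt w * e w) \<partial>M) \<le> (\<integral>w. ((zt w)\<^sup>2 / l + l * (e w)\<^sup>2) / 2 \<partial>M)"
      using zte zt2 e2i amgm_aux[OF lpos]
      by (intro integral_mono) auto
    also have "\<dots> = ((\<integral>w. (zt w)\<^sup>2 \<partial>M) / l + l * q) / 2"
      using zt2 e2i by (simp add: q_def Bochner_Integration.integral_add)
    finally have "l * q \<le> (real n * (v0 + v1) / 2 / l + l * q) / 2" using zte zt2 by simp
    then have "l * q \<le> real n * (v0 + v1) / 2 / l" by simp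
    then have "l * q * l \<le> real n * (v0 + v1) / 2" using lpos by (simp add: field_simps)
    then have h1: "real n * (real n * (K * K * q)) \<le> real n * ((v0 + v1) / 2)"
      by (simp add: l_def algebra_simps)
    have npos': "real n > 0" using npos by simp
    have h2: "real n * (K * K * q) \<le> (v0 + v1) / 2"
      using h1 npos' by (simp add: mult_le_cancel_left_pos)
    have h3: "4 * (real n * (K * K * q)) / (K\<^sup>2 * real n) \<le> 2 * (v0 + v1) / (K\<^sup>2 * real n)"
      using h2 npos' Kpos by (intro divide_right_mono) auto
    have h4: "4 * (real n * (K * K * q)) / (K\<^sup>2 * real n) = 4 * q"
      using npos' Kpos by (simp add: power2_eq_square field_simps)
    have qb: "4 * q \<le> DD / real n"
      using h3 h4 unfolding DDeq by (simp add: divide_divide_eq_left)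
    define Bad where "Bad = space M - Good"
    have Badm[measurable]: "Bad \<in> sets M" unfolding Bad_def by measurable
    have bad_le: "indicator Bad w \<le> 4 * (e w)\<^sup>2" if "w \<in> space M" for w
    proof (cases "w \<in> Bad")
      case True
      then have nG: "\<not> ((X w < 1/2 \<and> S w = 0) \<or> (1/2 < X w \<and> S w = 1))" using that by (simp add: Bad_def Good_eq)
      show ?thesis
      proof (cases "S w = 1")
        case True
        then have "X w \<le> 1/2" "J1 w = 1" using nG that by (auto simp: J1_def P1_def)
        then have "(1/2) ^ 2 \<le> (e w)\<^sup>2" unfolding e_def by (intro power_mono) auto
        then show ?thesis using \<open>w \<in> Bad\<close> by (simp add: power2_eq_square)
      next
        case False
        then have "S w = 0" using S_vals[OF that] by auto
        then have "1/2 \<le> X w" "J1 w = 0" using nG that by (auto simp: J1_def P1_def)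
        then have "(1/2) ^ 2 \<le> (e w)\<^sup>2" unfolding e_def by (simp add: power_mono)
        then show ?thesis using \<open>w \<in> Bad\<close> by (simp add: power2_eq_square)
      qed
    qed simp
    have "measure M Bad = (\<integral>w. indicator Bad w \<partial>M)" using Badm by (simp add: Int_absorb2 sets.sets_into_space)
    also have "\<dots> \<le> (\<integral>w. 4 * (e w)\<^sup>2 \<partial>M)"
      using bad_le e2i Badm by (intro integral_mono) (auto intro!: integrable_real_indicator simp: P.emeasure_eq_measure)
    also have "\<dots> = 4 * q" by (simp add: q_def)
    finally have "measure M Bad \<le> DD / real n" using qb by linarith
    moreover have "measure M Bad = 1 - measure M Good" unfolding Bad_def by (rule P.prob_compl[OF Goodm])
    ultimately have mG: "measure M Good \<ge> 1 - DD / real n" by linarith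
    have "measure M Good \<ge> 1 - 4 * DD / (real n + DD)"
      by (rule final_arith[OF _ _ measure_nonneg mG]) (use npos DDpos in auto)
    then show ?thesis by (simp add: Good_def DD_def n_def)
  qed
qed

end
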